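(* Let $G$ be a graph, $k$ an integer, and $v$ a vertex of $G$. Suppose $(C_1,C_2)$ is a partition of $N_G(v)$ with $|C_1|\ge|C_2|$ such that (i) $C_1$ and $C_2$ are cliques in $G$, and (ii) letting $M$ be the set of pairs $\{c_1,c_2\}$ with $c_1\in C_1$, $c_2\in C_2$ and $\{c_1,c_2\}\notin E(G)$, every $c_1\in C_1$ is contained in precisely one element of $M$. Let $G'$ be obtained from $G$ by deleting $v$ and all vertices of $C_2$, and then, for every $\{c_1,c_2\}\in M$ with $c_1\in C_1$, $c_2\in C_2$, adding all edges between $c_1$ and the vertices of $N_G(c_2)$ that remain in $G'$. Then $G$ has a vertex cover of size $k$ if and only if $G'$ has a vertex cover of size $k-|C_2|$.
   Context: All graphs are finite, simple, undirected. $N_G(x)$ is the open neighborhood of $x$ in $G$. A clique is a set of pairwise adjacent vertices. A vertex cover is a set of vertices containing at least one endpoint of every edge; "has a vertex cover of size $k$" means has a vertex cover of size at most $k$. *)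

theory Defs
  imports Main
begin

definition simple_graph :: "'a set \<Rightarrow> ('a \<Rightarrow> 'a \<Rightarrow> bool) \<Rightarrow> bool" where
  "simple_graph V E \<longleftrightarrow> finite V \<and> (\<forall>x y. E x y \<longrightarrow> x \<in> V \<and> y \<in> V)
     \<and> (\<forall>x y. E x y \<longrightarrow> E y x) \<and> (\<forall>x. \<not> E x x)"

definition nbhd :: "'a set \<Rightarrow> ('a \<Rightarrow> 'a \<Rightarrow> bool) \<Rightarrow> 'a \<Rightarrow> 'a set" where
  "nbhd V E x = {y \<in> V. E x y}"

definition is_clique :: "('a \<Rightarrow> 'a \<Rightarrow> bool) \<Rightarrow> 'a set \<Rightarrow> bool" where
  "is_clique E C \<longleftrightarrow> (\<forall>x\<in>C. \<forall>y\<in>C. x \<noteq> y \<longrightarrow> E x y)"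

definition is_vertex_cover :: "'a set \<Rightarrow> ('a \<Rightarrow> 'a \<Rightarrow> bool) \<Rightarrow> 'a set \<Rightarrow> bool" where
  "is_vertex_cover V E S \<longleftrightarrow> S \<subseteq> V \<and> (\<forall>x y. E x y \<longrightarrow> x \<in> S \<or> y \<in> S)"

text \<open>"has a vertex cover of size k" = of size at most k; k is an integer.\<close>
definition has_vc :: "'a set \<Rightarrow> ('a \<Rightarrow> 'a \<Rightarrow> bool) \<Rightarrow> int \<Rightarrow> bool" where
  "has_vc V E k \<longleftrightarrow> (\<exists>S. is_vertex_cover V E S \<and> int (card S) \<le> k)"

definition nonedges_M :: "('a \<Rightarrow> 'a \<Rightarrow> bool) \<Rightarrow> 'a set \<Rightarrow> 'a set \<Rightarrow> 'a set set" where
  "nonedges_M E C1 C2 = {{c1, c2} | c1 c2. c1 \<in> C1 \<and> c2 \<in> C2 \<and> \<not> E c1 c2}"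

definition red_V :: "'a set \<Rightarrow> 'a \<Rightarrow> 'a set \<Rightarrow> 'a set" where
  "red_V V v C2 = V - {v} - C2"

definition added_edge :: "'a set \<Rightarrow> ('a \<Rightarrow> 'a \<Rightarrow> bool) \<Rightarrow> 'a \<Rightarrow> 'a set \<Rightarrow> 'a set \<Rightarrow> 'a \<Rightarrow> 'a \<Rightarrow> bool" where
  "added_edge V E v C1 C2 c1 u \<longleftrightarrow> (\<exists>c2. {c1, c2} \<in> nonedges_M E C1 C2 \<and> c1 \<in> C1 \<and> c2 \<in> C2
      \<and> u \<in> nbhd V E c2 \<and> u \<in> red_V V v C2)"

definition red_E :: "'a set \<Rightarrow> ('a \<Rightarrow> 'a \<Rightarrow> bool) \<Rightarrow> 'a \<Rightarrow> 'a set \<Rightarrow> 'a set \<Rightarrow> 'a \<Rightarrow> 'a \<Rightarrow> bool" where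
  "red_E V E v C1 C2 x y \<longleftrightarrow> x \<in> red_V V v C2 \<and> y \<in> red_V V v C2 \<and> x \<noteq> y \<and>
     (E x y \<or> added_edge V E v C1 C2 x y \<or> added_edge V E v C1 C2 y x)"

end

theory Submission
  imports Defs
begin

theorem proposition5:
  fixes V :: "'a set" and E :: "'a \<Rightarrow> 'a \<Rightarrow> bool" and v :: 'a
    and C1 C2 :: "'a set" and k :: int
  assumes "simple_graph V E"
    and "v \<in> V"
    and "C1 \<union> C2 = nbhd V E v" and "C1 \<inter> C2 = {}"
    and "card C1 \<ge> card C2"
    and "is_clique E C1" and "is_clique E C2"
    and "\<forall>c1\<in>C1. card {e \<in> nonedges_M E C1 C2. c1 \<in> e} = 1"
  shows "has_vc V E k \<longleftrightarrow>
         has_vc (red_V V v C2) (red_E V E v C1 C2) (k - int (card C2))"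
proof -
  note sg = assms(1)[unfolded simple_graph_def]
  have finV: "finite V" using sg by blast
  have inV: "\<And>x y. E x y \<Longrightarrow> x \<in> V \<and> y \<in> V" using sg by blast
  have sym: "\<And>x y. E x y \<Longrightarrow> E y x" using sg by blast
  have irr: "\<And>x. \<not> E x x" using sg by blast
  have NV: "\<And>x. x \<in> C1 \<union> C2 \<longleftrightarrow> x \<in> V \<and> E v x" using assms(3) unfolding nbhd_def by blast
  have C1V: "C1 \<subseteq> V" and C2V: "C2 \<subseteq> V" using NV by auto
  have vC1: "v \<notin> C1" and vC2: "v \<notin> C2" using NV irr by blast+
  have finC1: "finite C1" and finC2: "finite C2" using C1V C2V finV finite_subset by auto
  have dis: "\<And>x. x \<in> C1 \<Longrightarrow> x \<notin> C2" using assms(4) by blast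
  have C1r: "C1 \<subseteq> red_V V v C2" using C1V vC1 assms(4) unfolding red_V_def by blast
  have cl1: "\<And>x y. x \<in> C1 \<Longrightarrow> y \<in> C1 \<Longrightarrow> x \<noteq> y \<Longrightarrow> E x y"
    using assms(6) unfolding is_clique_def by blast
  have cl2: "\<And>x y. x \<in> C2 \<Longrightarrow> y \<in> C2 \<Longrightarrow> x \<noteq> y \<Longrightarrow> E x y"
    using assms(7) unfolding is_clique_def by blast
  have Mmem: "{c1, c2} \<in> nonedges_M E C1 C2" if "c1 \<in> C1" "c2 \<in> C2" "\<not> E c1 c2" for c1 c2
    using that unfolding nonedges_M_def by blast
  have Mchar: "\<not> E c1 c2" if h: "{c1, c2} \<in> nonedges_M E C1 C2" "c1 \<in> C1" "c2 \<in> C2" for c1 c2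
  proof -
    obtain a b where ab: "{c1, c2} = {a, b}" "a \<in> C1" "b \<in> C2" "\<not> E a b"
      using h(1) unfolding nonedges_M_def by auto
    have "c1 = a \<and> c2 = b \<or> c1 = b \<and> c2 = a" using ab(1) by (simp add: doubleton_eq_iff)
    moreover have "\<not> (c1 = b \<and> c2 = a)" using ab(2,3) h(2) dis by metis
    ultimately show ?thesis using ab(4) by metis
  qed
  have partner: "\<exists>c2\<in>C2. \<not> E c1 c2" if "c1 \<in> C1" for c1
  proof -
    have "card {e \<in> nonedges_M E C1 C2. c1 \<in> e} = 1" using assms(8) that by blast
    then have "{e \<in> nonedges_M E C1 C2. c1 \<in> e} \<noteq> {}" by force
    then obtain e where "e \<in> nonedges_M E C1 C2" "c1 \<in> e" by blast
    then obtain a b where ab: "e = {a, b}" "a \<in> C1" "b \<in> C2" "\<not> E a b"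
      unfolding nonedges_M_def by blast
    have "c1 = a" using ab \<open>c1 \<in> e\<close> that dis by blast
    then show ?thesis using ab by blast
  qed
  have uniq: "c2 = c2'" if h: "c1 \<in> C1" "c2 \<in> C2" "c2' \<in> C2" "\<not> E c1 c2" "\<not> E c1 c2'" for c1 c2 c2'
  proof -
    have "card {e \<in> nonedges_M E C1 C2. c1 \<in> e} = 1" using assms(8) h(1) by blast
    then obtain e0 where e0: "{e \<in> nonedges_M E C1 C2. c1 \<in> e} = {e0}" by (meson card_1_singletonE)
    have m1: "{c1, c2} \<in> nonedges_M E C1 C2" using Mmem h(1,2,4) by blast
    have m2: "{c1, c2'} \<in> nonedges_M E C1 C2" using Mmem h(1,3,5) by blast
    have "{c1, c2} = e0" using m1 e0 by (metis (no_types, lifting) insertCI mem_Collect_eq singletonD)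
    moreover have "{c1, c2'} = e0" using m2 e0 by (metis (no_types, lifting) insertCI mem_Collect_eq singletonD)
    ultimately have "{c1, c2} = {c1, c2'}" by simp
    moreover have "c1 \<noteq> c2" using h(1,2) dis by metis
    ultimately show ?thesis by (metis doubleton_eq_iff)
  qed
  have added: "x \<in> C1 \<and> (\<exists>c2\<in>C2. \<not> E x c2 \<and> E c2 u \<and> u \<in> red_V V v C2)"
    if "added_edge V E v C1 C2 x u" for x u
    using that Mchar unfolding added_edge_def nbhd_def by blast
  have addI: "red_E V E v C1 C2 c1 u" if "c1 \<in> C1" "c2 \<in> C2" "\<not> E c1 c2" "E c2 u"
    "u \<in> red_V V v C2" "u \<noteq> c1" for c1 c2 u
  proof -
    have "added_edge V E v C1 C2 c1 u"
      unfolding added_edge_def nbhd_def using that Mmem inV by blast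
    then show ?thesis unfolding red_E_def using that C1r by blast
  qed
  show ?thesis
  proof
    assume "has_vc V E k"
    then obtain S where S: "is_vertex_cover V E S" "int (card S) \<le> k" unfolding has_vc_def by blast
    have SV: "S \<subseteq> V" and cov: "\<And>x y. E x y \<Longrightarrow> x \<in> S \<or> y \<in> S"
      using S(1) unfolding is_vertex_cover_def by blast+
    have finS: "finite S" using SV finV finite_subset by blast
    define R where "R = S \<inter> red_V V v C2"
    have finR: "finite R" using finS R_def by simp
    have Rr: "R \<subseteq> red_V V v C2" using R_def by blast
    have RS: "R \<subseteq> S" using R_def by blast
    have Edge: "x \<in> R \<or> y \<in> R" if "E x y" "x \<in> red_V V v C2" "y \<in> red_V V v C2" for x y
      using cov[OF that(1)] that R_def by blast
    have R_disj: "R \<inter> ({v} \<union> C2) = {}" unfolding R_def red_V_def by blast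
    show "has_vc (red_V V v C2) (red_E V E v C1 C2) (k - int (card C2))"
    proof (cases "v \<in> S")
      case False
      have C1S: "C1 \<subseteq> S" and C2S: "C2 \<subseteq> S" using cov NV False by blast+
      have "S = R \<union> C2" using C2S SV False unfolding R_def red_V_def by blast
      then have "card S = card R + card C2"
        using card_Un_disjoint[OF finR finC2] R_disj by auto
      moreover have "is_vertex_cover (red_V V v C2) (red_E V E v C1 C2) R"
        unfolding is_vertex_cover_def
      proof (intro conjI allI impI Rr)
        fix x y assume r: "red_E V E v C1 C2 x y"
        then have xy: "x \<in> red_V V v C2" "y \<in> red_V V v C2" unfolding red_E_def by blast+
        show "x \<in> R \<or> y \<in> R"
          using r xy Edge added C1S unfolding red_E_def R_def by blast
      qed
      ultimately show ?thesis unfolding has_vc_def using S(2) by (intro exI[of _ R]) auto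
    next
      case vS: True
      show ?thesis
      proof (cases "C2 \<subseteq> S")
        case True
        define S' where "S' = R \<union> (C1 - S)"
        have le1: "card (C1 - S) \<le> 1"
        proof -
          have "\<forall>a1 \<in> C1 - S. \<forall>a2 \<in> C1 - S. a1 = a2" using cov cl1 by blast
          then have "card (C1 - S) \<le> Suc 0" using finC1 card_le_Suc0_iff_eq by blast
          then show ?thesis by simp
        qed
        have "card S' \<le> card R + card (C1 - S)" unfolding S'_def by (rule card_Un_le)
        moreover have "R \<union> ({v} \<union> C2) \<subseteq> S" using RS vS True by blast
        then have "card (R \<union> ({v} \<union> C2)) \<le> card S" using finS card_mono by blast
        moreover have "card (R \<union> ({v} \<union> C2)) = card R + (1 + card C2)"
          using card_Un_disjoint[OF finR, of "{v} \<union> C2"] R_disj finC2 vC2 by simp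
        moreover have "is_vertex_cover (red_V V v C2) (red_E V E v C1 C2) S'"
          unfolding is_vertex_cover_def
        proof (intro conjI allI impI)
          show "S' \<subseteq> red_V V v C2" using Rr C1r S'_def by blast
          fix x y assume r: "red_E V E v C1 C2 x y"
          then have xy: "x \<in> red_V V v C2" "y \<in> red_V V v C2" unfolding red_E_def by blast+
          show "x \<in> S' \<or> y \<in> S'"
            using r xy Edge added C1r unfolding red_E_def S'_def R_def by blast
        qed
        ultimately show ?thesis unfolding has_vc_def using S(2) le1
          by (intro exI[of _ S']) auto
      next
        case False
        then obtain b where b: "b \<in> C2" "b \<notin> S" by blast
        have "R \<union> ({v} \<union> (C2 - {b})) \<subseteq> S" using RS vS cov cl2 b by blast
        then have "card (R \<union> ({v} \<union> (C2 - {b}))) \<le> card S" using finS card_mono by blast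
        moreover have "card (R \<union> ({v} \<union> (C2 - {b}))) = card R + (1 + (card C2 - 1))"
        proof -
          have "R \<inter> ({v} \<union> (C2 - {b})) = {}" using R_disj by blast
          then have "card (R \<union> ({v} \<union> (C2 - {b}))) = card R + card ({v} \<union> (C2 - {b}))"
            using card_Un_disjoint[OF finR, of "{v} \<union> (C2 - {b})"] finC2 by blast
          moreover have "card ({v} \<union> (C2 - {b})) = 1 + card (C2 - {b})" using finC2 vC2 by simp
          moreover have "card (C2 - {b}) = card C2 - 1" using b finC2 by (simp add: card_Diff_singleton)
          ultimately show ?thesis by simp
        qed
        moreover have "card C2 \<ge> 1" using b finC2 by (metis One_nat_def Suc_leI card_gt_0_iff empty_iff)
        moreover have "is_vertex_cover (red_V V v C2) (red_E V E v C1 C2) R"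
          unfolding is_vertex_cover_def
        proof (intro conjI allI impI Rr)
          fix x y assume r: "red_E V E v C1 C2 x y"
          then have xy: "x \<in> red_V V v C2" "y \<in> red_V V v C2" unfolding red_E_def by blast+
          have ad: "x \<in> R \<or> y \<in> R" if ha: "added_edge V E v C1 C2 x y" for x y
          proof -
            obtain c2 where c2: "x \<in> C1" "c2 \<in> C2" "\<not> E x c2" "E c2 y" "y \<in> red_V V v C2"
              using added[OF ha] by blast
            show ?thesis
            proof (cases "x \<in> S")
              case True then show ?thesis using c2 C1r R_def by blast
            next
              case False
              have "\<not> E x b" using cov False b by blast
              then have "c2 = b" using uniq c2 b by blast
              then have "y \<in> S" using cov c2 b by blast
              then show ?thesis using c2 R_def by blast
            qed
          qed
          show "x \<in> R \<or> y \<in> R"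
            using r xy Edge ad unfolding red_E_def by blast
        qed
        ultimately show ?thesis unfolding has_vc_def using S(2)
          by (intro exI[of _ R]) auto
      qed
    qed
  next
    assume "has_vc (red_V V v C2) (red_E V E v C1 C2) (k - int (card C2))"
    then obtain S' where S': "is_vertex_cover (red_V V v C2) (red_E V E v C1 C2) S'"
      "int (card S') \<le> k - int (card C2)" unfolding has_vc_def by blast
    have S'r: "S' \<subseteq> red_V V v C2" and cov: "\<And>x y. red_E V E v C1 C2 x y \<Longrightarrow> x \<in> S' \<or> y \<in> S'"
      using S'(1) unfolding is_vertex_cover_def by blast+
    have finS': "finite S'" using S'r finV finite_subset unfolding red_V_def by blast
    have Eto: "red_E V E v C1 C2 x y" if "E x y" "x \<in> red_V V v C2" "y \<in> red_V V v C2" for x y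
      using that irr unfolding red_E_def by blast
    show "has_vc V E k"
    proof (cases "C1 \<subseteq> S'")
      case True
      have "card (S' \<union> C2) \<le> card S' + card C2" by (rule card_Un_le)
      moreover have "is_vertex_cover V E (S' \<union> C2)"
        unfolding is_vertex_cover_def
      proof (intro conjI allI impI)
        show "S' \<union> C2 \<subseteq> V" using S'r C2V unfolding red_V_def by blast
        fix x y assume e: "E x y"
        show "x \<in> S' \<union> C2 \<or> y \<in> S' \<union> C2"
        proof (cases "x \<in> C2 \<or> y \<in> C2")
          case True then show ?thesis by blast
        next
          case False
          show ?thesis
          proof (cases "x = v \<or> y = v")
            case True then show ?thesis using e NV sym inV False \<open>C1 \<subseteq> S'\<close> by blast
          next
            case False2: False
            have "x \<in> red_V V v C2" "y \<in> red_V V v C2"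
              using inV[OF e] False False2 unfolding red_V_def by blast+
            then show ?thesis using cov Eto e by blast
          qed
        qed
      qed
      ultimately show ?thesis unfolding has_vc_def using S'(2) by (intro exI[of _ "S' \<union> C2"]) auto
    next
      case False
      then obtain c1 where c1: "c1 \<in> C1" "c1 \<notin> S'" by blast
      obtain c2 where c2: "c2 \<in> C2" "\<not> E c1 c2" using partner c1 by blast
      define S where "S = S' \<union> {v} \<union> (C2 - {c2})"
      have "card S \<le> card S' + card {v} + card (C2 - {c2})"
        unfolding S_def by (meson card_Un_le add_le_mono order_trans le_refl)
      moreover have "card (C2 - {c2}) = card C2 - 1" using c2 finC2 by (simp add: card_Diff_singleton)
      moreover have "card C2 \<ge> 1" using c2 finC2 by (metis One_nat_def Suc_leI card_gt_0_iff empty_iff)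
      moreover have "is_vertex_cover V E S"
        unfolding is_vertex_cover_def
      proof (intro conjI allI impI)
        show "S \<subseteq> V" using S'r C2V assms(2) unfolding red_V_def S_def by blast
        fix x y assume e: "E x y"
        have key: "y \<in> S" if hk: "E c2 y" for y
        proof (rule ccontr)
          assume yS: "y \<notin> S"
          have "y \<noteq> v" "y \<notin> C2 - {c2}" "y \<notin> S'" using yS S_def by blast+
          moreover have "y \<noteq> c2" using irr hk by blast
          ultimately have yr: "y \<in> red_V V v C2" using inV[OF hk] unfolding red_V_def by blast
          have "y \<noteq> c1" using c2 sym hk by blast
          then have "red_E V E v C1 C2 c1 y" using addI c1 c2 hk yr by blast
          then show False using cov c1 \<open>y \<notin> S'\<close> by blast
        qed
        show "x \<in> S \<or> y \<in> S"
        proof (cases "x = c2 \<or> y = c2")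
          case True then show ?thesis using key e sym by blast
        next
          case False
          show ?thesis
          proof (cases "x \<in> {v} \<union> C2 \<or> y \<in> {v} \<union> C2")
            case True then show ?thesis using False S_def by blast
          next
            case False2: False
            have "x \<in> red_V V v C2" "y \<in> red_V V v C2"
              using inV[OF e] False2 unfolding red_V_def by blast+
            then show ?thesis using cov Eto e S_def by blast
          qed
        qed
      qed
      ultimately show ?thesis unfolding has_vc_def using S'(2) by (intro exI[of _ S]) auto
    qed
  qed
qed

end
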